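(* A finitely generated group with the Powers property is not presentable by a product.
   Context: (de la Harpe) A group $\Gamma\neq\{1\}$ is a Powers group (has the Powers property) if for every finite subset $F\subset\Gamma\setminus\{1\}$ and every integer $N\ge 1$ there exist a partition $\Gamma=D\sqcup E$ and elements $\gamma_1,\dots,\gamma_N\in\Gamma$ such that $fD\cap D=\emptyset$ for all $f\in F$ and $\gamma_jE\cap\gamma_kE=\emptyset$ for all $j\neq k$. An infinite group $\Gamma$ is not presentable by a product if for every homomorphism $\varphi\colon \Gamma_1\times\Gamma_2\to\Gamma$ whose image has finite index in $\Gamma$, at least one of $\varphi(\Gamma_1)$, $\varphi(\Gamma_2)$ is finite. *)

theory Defs
  imports "HOL-Algebra.Algebra"
begin

definition fin_gen_group :: "('a, 'b) monoid_scheme \<Rightarrow> bool" where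
  "fin_gen_group G \<longleftrightarrow> group G \<and>
     (\<exists>S. finite S \<and> S \<subseteq> carrier G \<and> generate G S = carrier G)"

definition powers_group :: "('a, 'b) monoid_scheme \<Rightarrow> bool" where
  "powers_group G \<longleftrightarrow> group G \<and> carrier G \<noteq> {\<one>\<^bsub>G\<^esub>} \<and>
     (\<forall>F N. finite F \<and> F \<subseteq> carrier G - {\<one>\<^bsub>G\<^esub>} \<and> N \<ge> (1::nat) \<longrightarrow>
        (\<exists>D E (\<gamma>::nat \<Rightarrow> 'a).
            D \<subseteq> carrier G \<and> E \<subseteq> carrier G \<and> D \<union> E = carrier G \<and> D \<inter> E = {} \<and>
            (\<forall>j<N. \<gamma> j \<in> carrier G) \<and>
            (\<forall>f\<in>F. (f <#\<^bsub>G\<^esub> D) \<inter> D = {}) \<and>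
            (\<forall>j<N. \<forall>k<N. j \<noteq> k \<longrightarrow> (\<gamma> j <#\<^bsub>G\<^esub> E) \<inter> (\<gamma> k <#\<^bsub>G\<^esub> E) = {})))"

end

theory Submission
  imports Defs
begin

lemma powers_step:
  fixes G (structure)
  assumes grp: "group G"
    and DE: "D \<union> E = carrier G" "D \<inter> E = {}"
    and a: "a \<in> carrier G" "(a <#\<^bsub>G\<^esub> D) \<inter> D = {}"
    and g: "g \<in> carrier G" and y: "y \<in> carrier G" "y \<notin> g <#\<^bsub>G\<^esub> E"
  shows "(g \<otimes>\<^bsub>G\<^esub> a \<otimes>\<^bsub>G\<^esub> inv\<^bsub>G\<^esub> g) \<otimes>\<^bsub>G\<^esub> y \<in> g <#\<^bsub>G\<^esub> E"
proof -
  interpret group G by (rule grp)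
  have canc: "\<And>u x. u \<in> carrier G \<Longrightarrow> x \<in> carrier G \<Longrightarrow> inv u \<otimes> (u \<otimes> x) = x"
    by (simp add: m_assoc[symmetric])
  define d where "d = inv g \<otimes> y"
  have dc: "d \<in> carrier G" using g y by (simp add: d_def)
  have yd: "y = g \<otimes> d" using g y by (simp add: d_def m_assoc[symmetric])
  have "d \<notin> E" using y(2) yd unfolding l_coset_def by blast
  hence "d \<in> D" using DE dc by blast
  hence "a \<otimes> d \<notin> D" using a(2) unfolding l_coset_def by blast
  hence ad: "a \<otimes> d \<in> E" using DE dc a by blast
  have "(g \<otimes> a \<otimes> inv g) \<otimes> y = g \<otimes> (a \<otimes> d)"
    using g a dc yd by (simp add: m_assoc canc)
  thus ?thesis using ad unfolding l_coset_def by blast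
qed

lemma comm_conj:
  fixes G (structure)
  assumes grp: "group G"
    and c: "g \<in> carrier G" "d \<in> carrier G" "a \<in> carrier G" "b \<in> carrier G"
    and ac: "a \<otimes>\<^bsub>G\<^esub> (d \<otimes>\<^bsub>G\<^esub> b \<otimes>\<^bsub>G\<^esub> inv\<^bsub>G\<^esub> d) = (d \<otimes>\<^bsub>G\<^esub> b \<otimes>\<^bsub>G\<^esub> inv\<^bsub>G\<^esub> d) \<otimes>\<^bsub>G\<^esub> a"
  shows "(g \<otimes>\<^bsub>G\<^esub> a \<otimes>\<^bsub>G\<^esub> inv\<^bsub>G\<^esub> g) \<otimes>\<^bsub>G\<^esub> ((g \<otimes>\<^bsub>G\<^esub> d) \<otimes>\<^bsub>G\<^esub> b \<otimes>\<^bsub>G\<^esub> inv\<^bsub>G\<^esub> (g \<otimes>\<^bsub>G\<^esub> d))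
       = ((g \<otimes>\<^bsub>G\<^esub> d) \<otimes>\<^bsub>G\<^esub> b \<otimes>\<^bsub>G\<^esub> inv\<^bsub>G\<^esub> (g \<otimes>\<^bsub>G\<^esub> d)) \<otimes>\<^bsub>G\<^esub> (g \<otimes>\<^bsub>G\<^esub> a \<otimes>\<^bsub>G\<^esub> inv\<^bsub>G\<^esub> g)"
proof -
  interpret group G by (rule grp)
  have canc: "\<And>u x. u \<in> carrier G \<Longrightarrow> x \<in> carrier G \<Longrightarrow> inv u \<otimes> (u \<otimes> x) = x"
    by (simp add: m_assoc[symmetric])
  define k where "k = d \<otimes> b \<otimes> inv d"
  have kc: "k \<in> carrier G" using c by (simp add: k_def)
  have e1: "(g \<otimes> d) \<otimes> b \<otimes> inv (g \<otimes> d) = g \<otimes> k \<otimes> inv g"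
    using c by (simp add: k_def inv_mult_group m_assoc)
  have l: "(g \<otimes> a \<otimes> inv g) \<otimes> (g \<otimes> k \<otimes> inv g) = g \<otimes> (a \<otimes> k) \<otimes> inv g"
    using c kc by (simp add: m_assoc canc)
  have r: "(g \<otimes> k \<otimes> inv g) \<otimes> (g \<otimes> a \<otimes> inv g) = g \<otimes> (k \<otimes> a) \<otimes> inv g"
    using c kc by (simp add: m_assoc canc)
  show ?thesis using e1 l r ac by (simp add: k_def)
qed

lemma powers_core:
  fixes G (structure)
  assumes grp: "group G"
    and DE: "D \<union> E = carrier G" "D \<inter> E = {}"
    and a: "a \<in> carrier G" "(a <# D) \<inter> D = {}"
    and b: "b \<in> carrier G" "(b <# D) \<inter> D = {}"
    and g: "gi \<in> carrier G" "gj \<in> carrier G" "gk \<in> carrier G"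
    and disj: "(gi <# E) \<inter> (gj <# E) = {}" "(gj <# E) \<inter> (gk <# E) = {}"
       "(gi <# E) \<inter> (gk <# E) = {}"
    and comm: "(gi \<otimes> a \<otimes> inv gi) \<otimes> (gk \<otimes> b \<otimes> inv gk)
             = (gk \<otimes> b \<otimes> inv gk) \<otimes> (gi \<otimes> a \<otimes> inv gi)"
  shows "E = {}"
proof (rule ccontr)
  interpret group G by (rule grp)
  assume "E \<noteq> {}"
  then obtain e where e: "e \<in> E" by blast
  have ec: "e \<in> carrier G" using e DE by blast
  define u where "u = gi \<otimes> a \<otimes> inv gi"
  define v where "v = gk \<otimes> b \<otimes> inv gk"
  have uc: "u \<in> carrier G" and vc: "v \<in> carrier G" using g a b by (auto simp: u_def v_def)
  define x where "x = gj \<otimes> e"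
  have xc: "x \<in> carrier G" using g ec by (simp add: x_def)
  have xj: "x \<in> gj <# E" using e unfolding x_def l_coset_def by blast
  have xi: "x \<notin> gi <# E" using xj disj by blast
  have xk: "x \<notin> gk <# E" using xj disj by blast
  have ux: "u \<otimes> x \<in> gi <# E" unfolding u_def
    by (rule powers_step[OF grp DE a g(1) xc xi])
  have "u \<otimes> x \<notin> gk <# E" using ux disj by blast
  hence vux: "v \<otimes> (u \<otimes> x) \<in> gk <# E" unfolding v_def
    using powers_step[OF grp DE b g(3) _] uc xc by blast
  have vx: "v \<otimes> x \<in> gk <# E" unfolding v_def
    by (rule powers_step[OF grp DE b g(3) xc xk])
  have "v \<otimes> x \<notin> gi <# E" using vx disj by blast
  hence uvx: "u \<otimes> (v \<otimes> x) \<in> gi <# E" unfolding u_def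
    using powers_step[OF grp DE a g(1) _] vc xc by blast
  have "v \<otimes> (u \<otimes> x) = u \<otimes> (v \<otimes> x)"
    using comm uc vc xc by (simp add: u_def v_def m_assoc[symmetric])
  thus False using vux uvx disj by auto
qed

lemma powers_partition:
  fixes G (structure)
  assumes P: "powers_group G" and F: "finite F" "F \<subseteq> carrier G - {\<one>}" and N: "N \<ge> (1::nat)"
  obtains D E and \<gamma> :: "nat \<Rightarrow> 'a" where
    "D \<subseteq> carrier G" "E \<subseteq> carrier G" "D \<union> E = carrier G" "D \<inter> E = {}"
    "\<forall>j<N. \<gamma> j \<in> carrier G"
    "\<forall>f\<in>F. (f <# D) \<inter> D = {}"
    "\<forall>j<N. \<forall>k<N. j \<noteq> k \<longrightarrow> (\<gamma> j <# E) \<inter> (\<gamma> k <# E) = {}"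
proof -
  have all: "\<forall>F N. finite F \<and> F \<subseteq> carrier G - {\<one>} \<and> N \<ge> (1::nat) \<longrightarrow>
        (\<exists>D E (\<gamma>::nat \<Rightarrow> 'a).
            D \<subseteq> carrier G \<and> E \<subseteq> carrier G \<and> D \<union> E = carrier G \<and> D \<inter> E = {} \<and>
            (\<forall>j<N. \<gamma> j \<in> carrier G) \<and>
            (\<forall>f\<in>F. (f <# D) \<inter> D = {}) \<and>
            (\<forall>j<N. \<forall>k<N. j \<noteq> k \<longrightarrow> (\<gamma> j <# E) \<inter> (\<gamma> k <# E) = {}))"
    using P unfolding powers_group_def by (elim conjE)
  have "\<exists>D E (\<gamma>::nat \<Rightarrow> 'a).
            D \<subseteq> carrier G \<and> E \<subseteq> carrier G \<and> D \<union> E = carrier G \<and> D \<inter> E = {} \<and>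
            (\<forall>j<N. \<gamma> j \<in> carrier G) \<and>
            (\<forall>f\<in>F. (f <# D) \<inter> D = {}) \<and>
            (\<forall>j<N. \<forall>k<N. j \<noteq> k \<longrightarrow> (\<gamma> j <# E) \<inter> (\<gamma> k <# E) = {})"
    by (rule mp[OF spec[OF spec[OF all, of F], of N]]) (use F N in simp)
  then show ?thesis by (elim exE conjE) (rule that; assumption)
qed

lemma powers_infinite:
  fixes G (structure)
  assumes P: "powers_group G"
  shows "infinite (carrier G)"
proof
  assume fin: "finite (carrier G)"
  have grp: "group G" using P unfolding powers_group_def by blast
  interpret group G by (rule grp)
  have ne: "carrier G \<noteq> {\<one>}" using P unfolding powers_group_def by blast
  obtain f where f: "f \<in> carrier G" "f \<noteq> \<one>" using ne one_closed by blast
  define N where "N = Suc (card (carrier G))"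
  have fF: "finite {f}" "{f} \<subseteq> carrier G - {\<one>}" "N \<ge> (1::nat)"
    using f by (simp_all add: N_def)
  obtain D E and \<gamma> :: "nat \<Rightarrow> 'a" where
    DE: "D \<subseteq> carrier G" "E \<subseteq> carrier G" "D \<union> E = carrier G" "D \<inter> E = {}"
    and gc: "\<forall>j<N. \<gamma> j \<in> carrier G"
    and fD: "\<forall>h\<in>{f}. (h <# D) \<inter> D = {}"
    and dj: "\<forall>j<N. \<forall>k<N. j \<noteq> k \<longrightarrow> (\<gamma> j <# E) \<inter> (\<gamma> k <# E) = {}"
    by (rule powers_partition[OF P fF])
  have "E \<noteq> {}"
  proof
    assume "E = {}"
    hence "D = carrier G" using DE by blast
    hence "f \<otimes> \<one> \<in> (f <# D)" "f \<in> D" using f unfolding l_coset_def by auto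
    hence "f \<in> (f <# D) \<inter> D" using f by simp
    thus False using fD by simp
  qed
  then obtain e where e: "e \<in> E" by blast
  have "inj_on (\<lambda>j. \<gamma> j \<otimes> e) {..<N}"
  proof (rule inj_onI)
    fix j k assume jk: "j \<in> {..<N}" "k \<in> {..<N}" "\<gamma> j \<otimes> e = \<gamma> k \<otimes> e"
    show "j = k"
    proof (rule ccontr)
      assume "j \<noteq> k"
      hence "(\<gamma> j <# E) \<inter> (\<gamma> k <# E) = {}" using dj jk by simp
      moreover have "\<gamma> j \<otimes> e \<in> \<gamma> j <# E" "\<gamma> k \<otimes> e \<in> \<gamma> k <# E"
        using e unfolding l_coset_def by auto
      ultimately show False using jk(3) by (metis IntI empty_iff)
    qed
  qed
  moreover have "(\<lambda>j. \<gamma> j \<otimes> e) ` {..<N} \<subseteq> carrier G" using gc e DE by auto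
  ultimately have "card {..<N} \<le> card (carrier G)"
    using card_inj_on_le[OF _ _ fin] by blast
  thus False by (simp add: N_def)
qed

lemma powers_no_product:
  fixes G (structure)
  assumes P: "powers_group G" and g1: "group G1" and g2: "group G2"
    and hom: "\<phi> \<in> hom (G1 \<times>\<times> G2) G"
    and fin: "finite (rcosets (\<phi> ` carrier (G1 \<times>\<times> G2)))"
  shows "(\<forall>x\<in>carrier G1. \<phi> (x, \<one>\<^bsub>G2\<^esub>) = \<one>) \<or> (\<forall>y\<in>carrier G2. \<phi> (\<one>\<^bsub>G1\<^esub>, y) = \<one>)"
proof (rule ccontr)
  assume "\<not> ?thesis"
  then obtain x y where x: "x \<in> carrier G1" "\<phi> (x, \<one>\<^bsub>G2\<^esub>) \<noteq> \<one>"
    and y: "y \<in> carrier G2" "\<phi> (\<one>\<^bsub>G1\<^esub>, y) \<noteq> \<one>" by blast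
  have grp: "group G" using P unfolding powers_group_def by blast
  interpret group G by (rule grp)
  interpret G1: group G1 by (rule g1)
  interpret G2: group G2 by (rule g2)
  have gp: "group (G1 \<times>\<times> G2)" by (rule DirProd_group[OF g1 g2])
  interpret h: group_hom "G1 \<times>\<times> G2" G \<phi>
    using gp grp hom by (simp add: group_hom_def group_hom_axioms_def)
  define H where "H = \<phi> ` carrier (G1 \<times>\<times> G2)"
  have sH: "subgroup H G" unfolding H_def by (rule h.img_is_subgroup)
  have HG: "H \<subseteq> carrier G" using sH subgroup.subset by blast
  define a where "a = \<phi> (x, \<one>\<^bsub>G2\<^esub>)"
  define b where "b = \<phi> (\<one>\<^bsub>G1\<^esub>, y)"
  have ac: "a \<in> carrier G" using x unfolding a_def by (simp add: h.hom_closed)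
  have bc: "b \<in> carrier G" using y unfolding b_def by (simp add: h.hom_closed)
  define m where "m = card (rcosets H)"
  define N where "N = m + 3"
  have fF: "finite {a, b}" "{a, b} \<subseteq> carrier G - {\<one>}" "N \<ge> (1::nat)"
    using ac bc x y by (simp_all add: N_def a_def b_def)
  obtain D E and \<gamma> :: "nat \<Rightarrow> 'a" where
    DE: "D \<subseteq> carrier G" "E \<subseteq> carrier G" "D \<union> E = carrier G" "D \<inter> E = {}"
    and gc: "\<forall>j<N. \<gamma> j \<in> carrier G"
    and fD: "\<forall>h\<in>{a, b}. (h <# D) \<inter> D = {}"
    and dj: "\<forall>j<N. \<forall>k<N. j \<noteq> k \<longrightarrow> (\<gamma> j <# E) \<inter> (\<gamma> k <# E) = {}"
    by (rule powers_partition[OF P fF])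
  have aD: "(a <# D) \<inter> D = {}" and bD: "(b <# D) \<inter> D = {}" using fD by auto
  define c where "c = (\<lambda>j. H #> inv (\<gamma> j))"
  have "c ` {..<N} \<subseteq> rcosets H" unfolding c_def using gc HG by (auto intro: rcosetsI)
  hence "card (c ` {..<N}) \<le> m" unfolding m_def using fin H_def card_mono by metis
  hence "card (c ` {..<N}) < card {..<N}" by (simp add: N_def)
  hence "\<not> inj_on c {..<N}" by (rule pigeonhole)
  then obtain i k where ik: "i < N" "k < N" "i \<noteq> k" "c i = c k"
    unfolding inj_on_def by blast
  have "\<exists>j::nat. j < 3 \<and> j \<noteq> i \<and> j \<noteq> k" by presburger
  then obtain j where j: "j < 3" "j \<noteq> i" "j \<noteq> k" by blast
  have jN: "j < N" using j by (simp add: N_def)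
  have gi: "\<gamma> i \<in> carrier G" and gk: "\<gamma> k \<in> carrier G" and gj: "\<gamma> j \<in> carrier G"
    using gc ik jN by auto
  have "inv (\<gamma> i) \<in> H #> inv (\<gamma> k)"
    using ik(4) rcos_self[OF inv_closed[OF gi] sH] unfolding c_def by simp
  hence "inv (\<gamma> i) \<otimes> inv (inv (\<gamma> k)) \<in> H"
    using subgroup.rcos_module_imp[OF sH grp inv_closed[OF gk]] by blast
  hence dH: "inv (\<gamma> i) \<otimes> \<gamma> k \<in> H" using gk by simp
  define \<delta> where "\<delta> = inv (\<gamma> i) \<otimes> \<gamma> k"
  have dc: "\<delta> \<in> carrier G" using gi gk by (simp add: \<delta>_def)
  have gkd: "\<gamma> k = \<gamma> i \<otimes> \<delta>" using gi gk by (simp add: \<delta>_def m_assoc[symmetric])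
  obtain p q where pq: "p \<in> carrier G1" "q \<in> carrier G2" "\<delta> = \<phi> (p, q)"
    using dH unfolding \<delta>_def H_def by auto
  define z where "z = q \<otimes>\<^bsub>G2\<^esub> y \<otimes>\<^bsub>G2\<^esub> inv\<^bsub>G2\<^esub> q"
  have zc: "z \<in> carrier G2" using pq y by (simp add: z_def)
  have e1: "\<delta> \<otimes> b = \<phi> (p, q \<otimes>\<^bsub>G2\<^esub> y)"
    using pq y h.hom_mult[of "(p, q)" "(\<one>\<^bsub>G1\<^esub>, y)"] unfolding b_def by simp
  have e2: "inv \<delta> = \<phi> (inv\<^bsub>G1\<^esub> p, inv\<^bsub>G2\<^esub> q)"
    using pq h.hom_inv[of "(p, q)"] inv_DirProd[OF g1 g2] by simp
  have e3: "\<delta> \<otimes> b \<otimes> inv \<delta> = \<phi> (\<one>\<^bsub>G1\<^esub>, z)"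
    using e1 e2 pq y h.hom_mult[of "(p, q \<otimes>\<^bsub>G2\<^esub> y)" "(inv\<^bsub>G1\<^esub> p, inv\<^bsub>G2\<^esub> q)"]
    by (simp add: z_def)
  have e4: "a \<otimes> \<phi> (\<one>\<^bsub>G1\<^esub>, z) = \<phi> (x, z)"
    using x zc h.hom_mult[of "(x, \<one>\<^bsub>G2\<^esub>)" "(\<one>\<^bsub>G1\<^esub>, z)"] unfolding a_def by simp
  have e5: "\<phi> (\<one>\<^bsub>G1\<^esub>, z) \<otimes> a = \<phi> (x, z)"
    using x zc h.hom_mult[of "(\<one>\<^bsub>G1\<^esub>, z)" "(x, \<one>\<^bsub>G2\<^esub>)"] unfolding a_def by simp
  have comm0: "a \<otimes> (\<delta> \<otimes> b \<otimes> inv \<delta>) = (\<delta> \<otimes> b \<otimes> inv \<delta>) \<otimes> a"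
    using e3 e4 e5 by simp
  have comm: "(\<gamma> i \<otimes> a \<otimes> inv (\<gamma> i)) \<otimes> (\<gamma> k \<otimes> b \<otimes> inv (\<gamma> k))
             = (\<gamma> k \<otimes> b \<otimes> inv (\<gamma> k)) \<otimes> (\<gamma> i \<otimes> a \<otimes> inv (\<gamma> i))"
    unfolding gkd by (rule comm_conj[OF grp gi dc ac bc comm0])
  have d1: "(\<gamma> i <# E) \<inter> (\<gamma> j <# E) = {}" using dj ik jN j by simp
  have d2: "(\<gamma> j <# E) \<inter> (\<gamma> k <# E) = {}" using dj ik jN j by simp
  have d3: "(\<gamma> i <# E) \<inter> (\<gamma> k <# E) = {}" using dj ik by simp
  have "E = {}" by (rule powers_core[OF grp DE(3,4) ac aD bc bD gi gj gk d1 d2 d3 comm])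
  hence "D = carrier G" using DE by blast
  hence "a \<otimes> \<one> \<in> (a <# D)" "a \<in> D" using ac unfolding l_coset_def by auto
  hence "a \<in> (a <# D) \<inter> D" using ac by simp
  thus False using aD by simp
qed

theorem proposition5p1:
  fixes G :: "('a, 'm) monoid_scheme"
  assumes "fin_gen_group G" and "powers_group G"
  shows "infinite (carrier G) \<and>
    (\<forall>(G1 :: ('b, 'm1) monoid_scheme) (G2 :: ('c, 'm2) monoid_scheme) \<phi>.
       group G1 \<and> group G2 \<and> \<phi> \<in> hom (G1 \<times>\<times> G2) G \<and>
       finite (rcosets\<^bsub>G\<^esub> (\<phi> ` carrier (G1 \<times>\<times> G2))) \<longrightarrow>
       finite ((\<lambda>x. \<phi> (x, \<one>\<^bsub>G2\<^esub>)) ` carrier G1) \<or>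
       finite ((\<lambda>y. \<phi> (\<one>\<^bsub>G1\<^esub>, y)) ` carrier G2))"
proof (intro conjI allI impI)
  show "infinite (carrier G)" by (rule powers_infinite[OF assms(2)])
next
  fix G1 :: "('b, 'm1) monoid_scheme" and G2 :: "('c, 'm2) monoid_scheme" and \<phi>
  assume h: "group G1 \<and> group G2 \<and> \<phi> \<in> hom (G1 \<times>\<times> G2) G \<and>
       finite (rcosets\<^bsub>G\<^esub> (\<phi> ` carrier (G1 \<times>\<times> G2)))"
  have "(\<forall>x\<in>carrier G1. \<phi> (x, \<one>\<^bsub>G2\<^esub>) = \<one>\<^bsub>G\<^esub>) \<or> (\<forall>y\<in>carrier G2. \<phi> (\<one>\<^bsub>G1\<^esub>, y) = \<one>\<^bsub>G\<^esub>)"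
    using powers_no_product[OF assms(2)] h by blast
  thus "finite ((\<lambda>x. \<phi> (x, \<one>\<^bsub>G2\<^esub>)) ` carrier G1) \<or>
       finite ((\<lambda>y. \<phi> (\<one>\<^bsub>G1\<^esub>, y)) ` carrier G2)"
  proof
    assume "\<forall>x\<in>carrier G1. \<phi> (x, \<one>\<^bsub>G2\<^esub>) = \<one>\<^bsub>G\<^esub>"
    hence "(\<lambda>x. \<phi> (x, \<one>\<^bsub>G2\<^esub>)) ` carrier G1 \<subseteq> {\<one>\<^bsub>G\<^esub>}" by auto
    thus ?thesis using finite_subset by blast
  next
    assume "\<forall>y\<in>carrier G2. \<phi> (\<one>\<^bsub>G1\<^esub>, y) = \<one>\<^bsub>G\<^esub>"
    hence "(\<lambda>y. \<phi> (\<one>\<^bsub>G1\<^esub>, y)) ` carrier G2 \<subseteq> {\<one>\<^bsub>G\<^esub>}" by auto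
    thus ?thesis using finite_subset by blast
  qed
qed

end
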